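(* Let $\mathscr{G}$ be a graph class of asymptotic dimension at most $d$ with $d$-dimensional control function $f$. For every $G\in\mathscr{G}$ with $n$ vertices and every integer $r\ge1$, there exist sets $C_0,C_1,\dots,C_d\subseteq V(G)$ with $C_0\cup\dots\cup C_d=V(G)$ such that (i) for every $i$, every connected component of $G^r[C_i]$ has weak diameter in $G$ at most $f(3r)+2r$, and (ii) for every $i\in\{0,\dots,d\}$, $|C_i|\ge\lfloor n/(d+1)\rfloor$.
   Context: $G^r$ is the graph on $V(G)$ in which two vertices are adjacent iff their distance in $G$ is at most $r$. The weak diameter in $G$ of $Z\subseteq V(G)$ is the maximum $G$-distance between two vertices of $Z$. A class $\mathscr{G}$ has asymptotic dimension at most $d$ with $d$-dimensional control function $f:\mathbb{N}\to\mathbb{N}$ if for every $G\in\mathscr{G}$ and integer $r\ge1$ the vertices of $G$ can be coloured with $d+1$ colours so that any two vertices in the same connected component of the subgraph of $G^r$ induced by one colour class are at distance at most $f(r)$ in $G$. *)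

theory Defs
  imports Main
begin

type_synonym 'a graph = "'a set \<times> ('a \<Rightarrow> 'a \<Rightarrow> bool)"

definition verts :: "'a graph \<Rightarrow> 'a set" where "verts G = fst G"
definition adj :: "'a graph \<Rightarrow> 'a \<Rightarrow> 'a \<Rightarrow> bool" where "adj G = snd G"

definition simple_graph :: "'a graph \<Rightarrow> bool" where
  "simple_graph G \<longleftrightarrow>
     (\<forall>x y. adj G x y \<longrightarrow> x \<in> verts G \<and> y \<in> verts G) \<and>
     (\<forall>x y. adj G x y \<longrightarrow> adj G y x) \<and> (\<forall>x. \<not> adj G x x)"

text \<open>G-distance between x and y is at most k: there is a walk in G from x to y
  with at most k edges (vertex list of length at most k+1).\<close>
definition dist_le :: "'a graph \<Rightarrow> nat \<Rightarrow> 'a \<Rightarrow> 'a \<Rightarrow> bool" where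
  "dist_le G k x y \<longleftrightarrow> (\<exists>p. p \<noteq> [] \<and> hd p = x \<and> last p = y \<and> length p \<le> Suc k \<and>
      set p \<subseteq> verts G \<and> (\<forall>i. Suc i < length p \<longrightarrow> adj G (p ! i) (p ! Suc i)))"

definition graph_power :: "'a graph \<Rightarrow> nat \<Rightarrow> 'a graph" where
  "graph_power G r = (verts G, \<lambda>x y. x \<noteq> y \<and> dist_le G r x y)"

definition same_comp :: "'a graph \<Rightarrow> 'a set \<Rightarrow> 'a \<Rightarrow> 'a \<Rightarrow> bool" where
  "same_comp H C x y \<longleftrightarrow> (\<exists>p. p \<noteq> [] \<and> hd p = x \<and> last p = y \<and>
      set p \<subseteq> C \<inter> verts H \<and> (\<forall>i. Suc i < length p \<longrightarrow> adj H (p ! i) (p ! Suc i)))"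

definition comps_weak_diam_le :: "'a graph \<Rightarrow> nat \<Rightarrow> 'a set \<Rightarrow> nat \<Rightarrow> bool" where
  "comps_weak_diam_le G r C D \<longleftrightarrow>
     (\<forall>x y. same_comp (graph_power G r) C x y \<longrightarrow> dist_le G D x y)"

definition asdim_le :: "'a graph set \<Rightarrow> nat \<Rightarrow> (nat \<Rightarrow> nat) \<Rightarrow> bool" where
  "asdim_le \<G> d f \<longleftrightarrow>
     (\<forall>G\<in>\<G>. \<forall>r::nat. r \<ge> 1 \<longrightarrow>
        (\<exists>c :: 'a \<Rightarrow> nat. (\<forall>v\<in>verts G. c v \<le> d) \<and>
           (\<forall>i\<le>d. comps_weak_diam_le G r {v \<in> verts G. c v = i} (f r))))"

end

theory Submission
  imports Defs
begin

lemma dist_le_alt: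
  "dist_le G k x y \<longleftrightarrow> (\<exists>p. p \<noteq> [] \<and> hd p = x \<and> last p = y \<and> length p \<le> Suc k \<and>
      set p \<subseteq> verts G \<and> successively (adj G) p)"
  unfolding dist_le_def successively_conv_nth by simp

lemma same_comp_alt:
  "same_comp H C x y \<longleftrightarrow> (\<exists>p. p \<noteq> [] \<and> hd p = x \<and> last p = y \<and>
      set p \<subseteq> C \<inter> verts H \<and> successively (adj H) p)"
  unfolding same_comp_def successively_conv_nth by simp

lemma dist_le_refl: "x \<in> verts G \<Longrightarrow> dist_le G k x x"
  unfolding dist_le_alt by (rule exI[of _ "[x]"]) auto

lemma dist_le_mono: "dist_le G k x y \<Longrightarrow> k \<le> k' \<Longrightarrow> dist_le G k' x y"
  unfolding dist_le_alt by (metis le_trans Suc_le_mono)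

lemma dist_le_sym:
  assumes "simple_graph G" "dist_le G k x y" shows "dist_le G k y x"
proof -
  from assms(2) obtain p where p: "p \<noteq> []" "hd p = x" "last p = y" "length p \<le> Suc k"
      "set p \<subseteq> verts G" "successively (adj G) p" unfolding dist_le_alt by blast
  have s: "\<And>u v. adj G u v \<Longrightarrow> adj G v u" using assms(1) unfolding simple_graph_def by blast
  have "successively (adj G) (rev p)"
    using p(6) by (simp add: successively_mono s)
  then show ?thesis unfolding dist_le_alt using p
    by (intro exI[of _ "rev p"]) (auto simp: hd_rev last_rev)
qed

lemma dist_le_trans:
  assumes "dist_le G a x y" "dist_le G b y z" shows "dist_le G (a + b) x z"
proof -
  from assms(1) obtain p where p: "p \<noteq> []" "hd p = x" "last p = y" "length p \<le> Suc a"
      "set p \<subseteq> verts G" "successively (adj G) p" unfolding dist_le_alt by blast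
  from assms(2) obtain q where q: "q \<noteq> []" "hd q = y" "last q = z" "length q \<le> Suc b"
      "set q \<subseteq> verts G" "successively (adj G) q" unfolding dist_le_alt by blast
  obtain w ws where qw: "q = w # ws" using q(1) by (cases q) auto
  have "successively (adj G) (p @ ws)"
    using p q qw by (auto simp: successively_append_iff successively_Cons)
  moreover have "last (p @ ws) = z" using p q qw by (cases ws) auto
  ultimately show ?thesis unfolding dist_le_alt using p q qw
    by (intro exI[of _ "p @ ws"]) auto
qed

lemma same_comp_refl: "x \<in> C \<Longrightarrow> x \<in> verts H \<Longrightarrow> same_comp H C x x"
  unfolding same_comp_alt by (rule exI[of _ "[x]"]) auto

lemma same_comp_snoc:
  assumes "same_comp H C x u" "v \<in> C" "v \<in> verts H" "adj H u v"
  shows "same_comp H C x v"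
proof -
  from assms(1) obtain p where p: "p \<noteq> []" "hd p = x" "last p = u"
      "set p \<subseteq> C \<inter> verts H" "successively (adj H) p" unfolding same_comp_alt by blast
  show ?thesis unfolding same_comp_alt using p assms
    by (intro exI[of _ "p @ [v]"]) (auto simp: successively_append_iff)
qed

lemma same_comp_mono: "same_comp H C x y \<Longrightarrow> C \<subseteq> C' \<Longrightarrow> same_comp H C' x y"
  unfolding same_comp_alt by blast

lemma same_comp_ends: "same_comp H C x y \<Longrightarrow> x \<in> C \<and> x \<in> verts H"
  unfolding same_comp_alt by (metis IntD1 IntD2 hd_in_set subsetD)

lemma same_comp_induct:
  assumes "same_comp H C x y" "P x"
    "\<And>u v. P u \<Longrightarrow> u \<in> C \<Longrightarrow> v \<in> C \<Longrightarrow> u \<in> verts H \<Longrightarrow> v \<in> verts H \<Longrightarrow> adj H u v \<Longrightarrow> P v"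
  shows "P y"
proof -
  from assms(1) obtain p where p: "p \<noteq> []" "hd p = x" "last p = y"
      "set p \<subseteq> C \<inter> verts H" "successively (adj H) p" unfolding same_comp_alt by blast
  have "p \<noteq> [] \<longrightarrow> hd p = x \<longrightarrow> set p \<subseteq> C \<inter> verts H \<longrightarrow> successively (adj H) p \<longrightarrow> P (last p)"
  proof (induction p rule: rev_induct)
    case Nil then show ?case by simp
  next
    case (snoc v xs)
    show ?case
    proof (cases "xs = []")
      case True then show ?thesis using assms(2) by simp
    next
      case False
      show ?thesis
      proof (intro impI)
        assume h: "xs @ [v] \<noteq> []" "hd (xs @ [v]) = x" "set (xs @ [v]) \<subseteq> C \<inter> verts H"
          "successively (adj H) (xs @ [v])"
        have sx: "successively (adj H) xs" and lx: "adj H (last xs) v"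
          using h(4) False by (simp_all add: successively_append_iff)
        have hx: "hd xs = x" using h(2) False by simp
        have setx: "set xs \<subseteq> C \<inter> verts H" using h(3) by simp
        have "P (last xs)" using snoc.IH False hx setx sx by blast
        moreover have "last xs \<in> set xs" using False by simp
        moreover have "v \<in> C" "v \<in> verts H" using h(3) by auto
        ultimately show "P (last (xs @ [v]))" using setx lx
          by (simp add: assms(3)[of "last xs" v] subset_iff)
      qed
    qed
  qed
  then have "P (last p)" using p(1,2,4,5) by blast
  then show ?thesis using p(3) by simp
qed

lemma adj_power: "adj (graph_power G r) u v \<longleftrightarrow> u \<noteq> v \<and> dist_le G r u v"
  unfolding graph_power_def adj_def by simp

lemma verts_power: "verts (graph_power G r) = verts G"
  unfolding graph_power_def verts_def by simp

definition nbhd :: "'a graph \<Rightarrow> nat \<Rightarrow> 'a set \<Rightarrow> 'a set" where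
  "nbhd G r A = {v \<in> verts G. \<exists>a\<in>A. dist_le G r a v}"

lemma optionA:
  assumes sg: "simple_graph G" and good: "comps_weak_diam_le G (3 * r) A D" and AV: "A \<subseteq> verts G"
  shows "comps_weak_diam_le G r (nbhd G r A) (D + 2 * r)"
  unfolding comps_weak_diam_le_def
proof (intro allI impI)
  fix x y assume sc: "same_comp (graph_power G r) (nbhd G r A) x y"
  have "x \<in> nbhd G r A" using same_comp_ends[OF sc] by (rule conjunct1)
  then obtain ax where ax: "ax \<in> A" "dist_le G r ax x" unfolding nbhd_def by blast
  let ?P = "\<lambda>u. \<exists>a\<in>A. dist_le G r a u \<and> same_comp (graph_power G (3 * r)) A ax a"
  have "?P y"
  proof (rule same_comp_induct[OF sc, where P = "?P"])
    have "same_comp (graph_power G (3 * r)) A ax ax"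
      using ax AV by (intro same_comp_refl) (auto simp: verts_power)
    then show "?P x" using ax by blast
  next
    fix u v assume Pu: "?P u" and v: "v \<in> nbhd G r A" and uv: "adj (graph_power G r) u v"
    from Pu obtain a where a: "a \<in> A" "dist_le G r a u" "same_comp (graph_power G (3 * r)) A ax a"
      by blast
    from v obtain b where b: "b \<in> A" "dist_le G r b v" unfolding nbhd_def by blast
    have uv': "dist_le G r u v" using uv by (simp add: adj_power)
    have "dist_le G (r + r) a v" by (rule dist_le_trans[OF a(2) uv'])
    then have "dist_le G (r + r + r) a b" by (rule dist_le_trans[OF _ dist_le_sym[OF sg b(2)]])
    then have dab: "dist_le G (3 * r) a b" by (simp add: numeral_3_eq_3 add.assoc)
    have "same_comp (graph_power G (3 * r)) A ax b"
    proof (cases "a = b")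
      case True then show ?thesis using a by simp
    next
      case False
      have bV: "b \<in> verts (graph_power G (3 * r))" using b(1) AV by (auto simp: verts_power)
      have ab: "adj (graph_power G (3 * r)) a b" using False dab by (simp add: adj_power)
      show ?thesis by (rule same_comp_snoc[OF a(3) b(1) bV ab])
    qed
    then show "?P v" using b by blast
  qed
  then obtain b where b: "b \<in> A" "dist_le G r b y" "same_comp (graph_power G (3 * r)) A ax b"
    by blast
  have "dist_le G D ax b" using good b(3) unfolding comps_weak_diam_le_def by blast
  then have "dist_le G (r + D + r) x y"
    by (rule dist_le_trans[OF dist_le_trans[OF dist_le_sym[OF sg ax(2)]] b(2)])
  then show "dist_le G (D + 2 * r) x y" by (simp add: add.commute add.left_commute mult_2)
qed

lemma optionB:
  assumes sg: "simple_graph G" and goodA: "comps_weak_diam_le G (3 * r) A D"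
    and goodB: "comps_weak_diam_le G (3 * r) B D"
    and AV: "A \<subseteq> verts G" and BV: "B' \<subseteq> B" "B \<subseteq> verts G"
    and far: "\<And>a b. a \<in> A \<Longrightarrow> b \<in> B' \<Longrightarrow> \<not> dist_le G r a b"
  shows "comps_weak_diam_le G r (A \<union> B') D"
  unfolding comps_weak_diam_le_def
proof (intro allI impI)
  fix x y assume sc: "same_comp (graph_power G r) (A \<union> B') x y"
  have r3: "\<And>u v. dist_le G r u v \<Longrightarrow> dist_le G (3 * r) u v" by (erule dist_le_mono) simp
  have x: "x \<in> A \<union> B'" using same_comp_ends[OF sc] by (rule conjunct1)
  then show "dist_le G D x y"
  proof
    assume xA: "x \<in> A"
    let ?P = "\<lambda>u. u \<in> A \<and> same_comp (graph_power G (3 * r)) A x u"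
    have "?P y"
    proof (rule same_comp_induct[OF sc, where P = "?P"])
      show "?P x" using xA AV by (auto intro!: same_comp_refl simp: verts_power)
    next
      fix u v assume Pu: "?P u" and v: "v \<in> A \<union> B'" and uv: "adj (graph_power G r) u v"
      have "v \<in> A" using v far Pu uv by (auto simp: adj_power)
      then show "?P v" using Pu uv AV r3
        by (auto intro!: same_comp_snoc[of _ _ x u] simp: adj_power verts_power)
    qed
    then show ?thesis using goodA unfolding comps_weak_diam_le_def by blast
  next
    assume xB: "x \<in> B'"
    let ?P = "\<lambda>u. u \<in> B' \<and> same_comp (graph_power G (3 * r)) B x u"
    have "?P y"
    proof (rule same_comp_induct[OF sc, where P = "?P"])
      show "?P x" using xB BV by (auto intro!: same_comp_refl simp: verts_power)
    next
      fix u v assume Pu: "?P u" and v: "v \<in> A \<union> B'" and uv: "adj (graph_power G r) u v"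
      have "v \<in> B'"
      proof (rule ccontr)
        assume "v \<notin> B'"
        then have vA: "v \<in> A" using v by blast
        have "dist_le G r u v" using uv by (simp add: adj_power)
        then have "dist_le G r v u" by (rule dist_le_sym[OF sg])
        moreover have "\<not> dist_le G r v u" using far[OF vA] Pu by blast
        ultimately show False by blast
      qed
      then show "?P v" using Pu uv BV r3
        by (auto intro!: same_comp_snoc[of _ _ x u] simp: adj_power verts_power)
    qed
    then show ?thesis using goodB unfolding comps_weak_diam_le_def by blast
  qed
qed


lemma comps_mono: "comps_weak_diam_le G r C D \<Longrightarrow> D \<le> D' \<Longrightarrow> comps_weak_diam_le G r C D'"
  unfolding comps_weak_diam_le_def by (metis dist_le_mono)

theorem mainTheorem13:
  fixes \<G> :: "'a graph set" and d :: nat and f :: "nat \<Rightarrow> nat"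
    and G :: "'a graph" and n r :: nat
  assumes "asdim_le \<G> d f"
    and "G \<in> \<G>" and "simple_graph G" and "finite (verts G)" and "card (verts G) = n"
    and "r \<ge> 1"
  shows "\<exists>C :: nat \<Rightarrow> 'a set.
           (\<forall>i\<le>d. C i \<subseteq> verts G) \<and> (\<Union>i\<le>d. C i) = verts G \<and>
           (\<forall>i\<le>d. comps_weak_diam_le G r (C i) (f (3 * r) + 2 * r)) \<and>
           (\<forall>i\<le>d. card (C i) \<ge> n div (d + 1))"
proof -
  note sg = assms(3) and fin = assms(4)
  obtain c :: "'a \<Rightarrow> nat" where c: "\<forall>v\<in>verts G. c v \<le> d"
    "\<forall>i\<le>d. comps_weak_diam_le G (3 * r) {v \<in> verts G. c v = i} (f (3 * r))"
  proof -
    have "3 * r \<ge> 1" using assms(6) by simp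
    then show ?thesis using that assms(1,2) unfolding asdim_le_def by blast
  qed
  define A where "A i = {v \<in> verts G. c v = i}" for i
  define m where "m = n div (d + 1)"
  define D where "D = f (3 * r)"
  have AV: "A i \<subseteq> verts G" for i unfolding A_def by blast
  have mle: "(d + 1) * m \<le> n" unfolding m_def by (rule times_div_less_eq_dividend)
  have key: "\<exists>C. A i \<subseteq> C \<and> C \<subseteq> verts G \<and> comps_weak_diam_le G r C (D + 2 * r) \<and> m \<le> card C"
    if i: "i \<le> d" for i
  proof -
    define N where "N = nbhd G r (A i)"
    have AN: "A i \<subseteq> N" unfolding N_def nbhd_def using AV dist_le_refl by fastforce
    have NV: "N \<subseteq> verts G" unfolding N_def nbhd_def by blast
    have goodi: "comps_weak_diam_le G (3 * r) (A i) D" using c(2) i unfolding A_def D_def by blast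
    show ?thesis
    proof (cases "m \<le> card N")
      case True
      then show ?thesis using AN NV optionA[OF sg goodi AV] unfolding N_def by blast
    next
      case False
      define R where "R = verts G - N"
      have "\<exists>j\<in>{..d}-{i}. m \<le> card (A j \<inter> R)"
      proof (rule ccontr)
        assume "\<not> ?thesis"
        then have lt: "\<And>j. j \<in> {..d}-{i} \<Longrightarrow> card (A j \<inter> R) \<le> m" by force
        have "R \<subseteq> (\<Union>j\<in>{..d}-{i}. A j \<inter> R)"
        proof
          fix v assume v: "v \<in> R"
          then have "v \<in> verts G" "c v \<le> d" using c(1) unfolding R_def by auto
          moreover have "c v \<noteq> i" using v AN unfolding R_def A_def by auto
          ultimately show "v \<in> (\<Union>j\<in>{..d}-{i}. A j \<inter> R)" using v unfolding A_def by auto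
        qed
        then have "card R \<le> card (\<Union>j\<in>{..d}-{i}. A j \<inter> R)"
          by (intro card_mono) (auto simp: R_def fin)
        also have "\<dots> \<le> (\<Sum>j\<in>{..d}-{i}. card (A j \<inter> R))" by (rule card_UN_le) simp
        also have "\<dots> \<le> card ({..d}-{i}) * m" using sum_bounded_above[of "{..d}-{i}" "\<lambda>j. card (A j \<inter> R)" m] lt by simp
        also have "card ({..d}-{i}) = d" using i by simp
        finally have "card R \<le> d * m" .
        moreover have "card R = n - card N" unfolding R_def using NV fin assms(5)
          by (simp add: card_Diff_subset finite_subset)
        moreover have "card N \<le> n" using NV fin assms(5) card_mono by blast
        ultimately show False using False mle by (simp add: algebra_simps)
      qed
      then obtain j where j: "j \<le> d" "j \<noteq> i" "m \<le> card (A j \<inter> R)" by blast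
      have goodj: "comps_weak_diam_le G (3 * r) (A j) D" using c(2) j unfolding A_def D_def by blast
      have far: "\<And>a b. a \<in> A i \<Longrightarrow> b \<in> A j \<inter> R \<Longrightarrow> \<not> dist_le G r a b"
        unfolding R_def N_def nbhd_def by blast
      have g: "comps_weak_diam_le G r (A i \<union> (A j \<inter> R)) (D + 2 * r)"
        by (rule comps_mono[OF optionB[OF sg goodi goodj AV _ AV far]]) auto
      have "card (A j \<inter> R) \<le> card (A i \<union> (A j \<inter> R))"
        by (rule card_mono) (use fin AV in \<open>auto intro: finite_subset\<close>)
      then show ?thesis using g j AV by (intro exI[of _ "A i \<union> (A j \<inter> R)"]) auto
    qed
  qed
  define C where "C i = (SOME C. A i \<subseteq> C \<and> C \<subseteq> verts G \<and> comps_weak_diam_le G r C (D + 2 * r) \<and> m \<le> card C)" for i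
  have Cp: "A i \<subseteq> C i \<and> C i \<subseteq> verts G \<and> comps_weak_diam_le G r (C i) (D + 2 * r) \<and> m \<le> card (C i)"
    if "i \<le> d" for i
    unfolding C_def by (rule someI_ex) (rule key[OF that])
  have cover: "(\<Union>i\<le>d. C i) = verts G"
  proof
    show "(\<Union>i\<le>d. C i) \<subseteq> verts G" using Cp by blast
    show "verts G \<subseteq> (\<Union>i\<le>d. C i)"
    proof
      fix v assume v: "v \<in> verts G"
      then have "v \<in> A (c v)" "c v \<le> d" using c(1) unfolding A_def by auto
      then show "v \<in> (\<Union>i\<le>d. C i)" using Cp by blast
    qed
  qed
  show ?thesis using Cp cover unfolding D_def m_def by (intro exI[of _ C]) blast
qed

end
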